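(* For an abelian group $A$, the following are equivalent: (i) $A$ is finitely generated; (ii) $A$ is SB-generated; (iii) $A$ has uncountable cofinality.
   Context: A subset of a group $G$ is strongly bounded if it has finite diameter in every left-invariant metric on $G$; a group is SB-generated if it is generated by a strongly bounded subset. A group has uncountable cofinality if it cannot be written as the union of a strictly increasing sequence $H_1\subsetneq H_2\subsetneq\cdots$ of subgroups. *)

theory Defs
  imports "HOL-Algebra.Algebra"
begin

definition left_inv_metric :: "('a, 'b) monoid_scheme \<Rightarrow> ('a \<Rightarrow> 'a \<Rightarrow> real) \<Rightarrow> bool" where
  "left_inv_metric G d \<longleftrightarrow>
     (\<forall>x\<in>carrier G. \<forall>y\<in>carrier G. d x y = 0 \<longleftrightarrow> x = y) \<and>
     (\<forall>x\<in>carrier G. \<forall>y\<in>carrier G. d x y = d y x) \<and>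
     (\<forall>x\<in>carrier G. \<forall>y\<in>carrier G. \<forall>z\<in>carrier G. d x z \<le> d x y + d y z) \<and>
     (\<forall>g\<in>carrier G. \<forall>x\<in>carrier G. \<forall>y\<in>carrier G. d (g \<otimes>\<^bsub>G\<^esub> x) (g \<otimes>\<^bsub>G\<^esub> y) = d x y)"

definition strongly_bounded :: "('a, 'b) monoid_scheme \<Rightarrow> 'a set \<Rightarrow> bool" where
  "strongly_bounded G S \<longleftrightarrow> S \<subseteq> carrier G \<and>
     (\<forall>d. left_inv_metric G d \<longrightarrow> (\<exists>C. \<forall>x\<in>S. \<forall>y\<in>S. d x y \<le> C))"

definition finitely_generated :: "('a, 'b) monoid_scheme \<Rightarrow> bool" where
  "finitely_generated G \<longleftrightarrow> (\<exists>S. finite S \<and> S \<subseteq> carrier G \<and> generate G S = carrier G)"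

definition SB_generated :: "('a, 'b) monoid_scheme \<Rightarrow> bool" where
  "SB_generated G \<longleftrightarrow> (\<exists>S. strongly_bounded G S \<and> generate G S = carrier G)"

definition uncountable_cofinality :: "('a, 'b) monoid_scheme \<Rightarrow> bool" where
  "uncountable_cofinality G \<longleftrightarrow>
     \<not> (\<exists>H :: nat \<Rightarrow> 'a set. (\<forall>n. subgroup (H n) G) \<and> (\<forall>n. H n \<subset> H (Suc n)) \<and>
           (\<Union>n. H n) = carrier G)"

end

theory Submission
  imports Defs "HOL-Computational_Algebra.Primes"
begin

context group begin

lemma chain_Union_subgroup:
  assumes "CC \<noteq> {}" "\<forall>K\<in>CC. subgroup K G" "\<forall>K1\<in>CC. \<forall>K2\<in>CC. K1 \<subseteq> K2 \<or> K2 \<subseteq> K1"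
  shows "subgroup (\<Union>CC) G"
proof (rule subgroup.intro)
  show "\<Union>CC \<subseteq> carrier G"
  proof
    fix x assume "x \<in> \<Union>CC"
    then obtain K where K: "K \<in> CC" "x \<in> K" by blast
    show "x \<in> carrier G" by (rule subgroup.mem_carrier[OF bspec[OF assms(2) K(1)] K(2)])
  qed
  obtain K where K: "K \<in> CC" using assms(1) by blast
  have "\<one> \<in> K" by (rule subgroup.one_closed[OF bspec[OF assms(2) K]])
  then show "\<one> \<in> \<Union>CC" using K by blast
next
  fix x assume "x \<in> \<Union>CC"
  then obtain K where K: "K \<in> CC" "x \<in> K" by blast
  have "inv x \<in> K" by (rule subgroup.m_inv_closed[OF bspec[OF assms(2) K(1)] K(2)])
  then show "inv x \<in> \<Union>CC" using K by blast
next
  fix x y assume "x \<in> \<Union>CC" "y \<in> \<Union>CC"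
  then obtain K1 K2 where K: "K1\<in>CC" "K2\<in>CC" "x\<in>K1" "y\<in>K2" by blast
  show "x \<otimes> y \<in> \<Union>CC"
  proof (cases "K1 \<subseteq> K2")
    case True
    then have "x \<in> K2" using K by blast
    then have "x \<otimes> y \<in> K2" by (rule subgroup.m_closed[OF bspec[OF assms(2) K(2)] _ K(4)])
    then show ?thesis using K by blast
  next
    case False
    then have "K2 \<subseteq> K1" using K assms(3) by blast
    then have "y \<in> K1" using K by blast
    then have "x \<otimes> y \<in> K1" by (rule subgroup.m_closed[OF bspec[OF assms(2) K(1)] K(3)])
    then show ?thesis using K by blast
  qed
qed

lemma seq_mono:
  assumes "\<forall>n. D n \<subseteq> D (Suc n)" "i \<le> j" shows "D i \<subseteq> D j"
proof (rule lift_Suc_mono_le[of D])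
  show "\<And>n. D n \<subseteq> D (Suc n)" using assms(1) by blast
qed (rule assms(2))

lemma seq_Union_subgroup:
  assumes "\<forall>n. subgroup (D n) G" "\<forall>n. D n \<subseteq> D (Suc n)"
  shows "subgroup (\<Union>n. D n) G"
proof (rule chain_Union_subgroup)
  show "\<forall>K1\<in>range D. \<forall>K2\<in>range D. K1 \<subseteq> K2 \<or> K2 \<subseteq> K1"
  proof (intro ballI)
    fix K1 K2 assume "K1 \<in> range D" "K2 \<in> range D"
    then obtain i j where "K1 = D i" "K2 = D j" by blast
    then show "K1 \<subseteq> K2 \<or> K2 \<subseteq> K1"
      using seq_mono[OF assms(2), of i j] seq_mono[OF assms(2), of j i] by (cases "i \<le> j") auto
  qed
  show "range D \<noteq> {}" by simp
  show "\<forall>K\<in>range D. subgroup K G" using assms(1) by simp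
qed


lemma UC_stable:
  assumes uc: "uncountable_cofinality G" and sg: "\<forall>n. subgroup (H n) G"
    and mono: "\<forall>n. H n \<subseteq> H (Suc n)" and un: "(\<Union>n. H n) = carrier G"
  shows "\<exists>n. H n = carrier G"
proof (rule ccontr)
  assume "\<not> ?thesis"
  then have ne: "\<forall>n. H n \<noteq> carrier G" by blast
  have step: "\<exists>m. m > n \<and> H n \<subset> H m" for n
  proof -
    have "H n \<subseteq> carrier G" using un by blast
    then obtain x where x: "x \<in> carrier G" "x \<notin> H n" using ne by blast
    then obtain m where m: "x \<in> H m" using un by blast
    have "\<not> m \<le> n" using seq_mono[OF mono, of m n] x m by blast
    then have "n \<le> m" "n \<noteq> m" by auto
    then have "H n \<subset> H m" using seq_mono[OF mono, of n m] x m by blast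
    then show ?thesis using \<open>n \<le> m\<close> \<open>n \<noteq> m\<close> by (intro exI[of _ m]) simp
  qed
  define g where "g = rec_nat 0 (\<lambda>_ k. SOME m. m > k \<and> H k \<subset> H m)"
  have gs: "g (Suc k) > g k \<and> H (g k) \<subset> H (g (Suc k))" for k
  proof -
    have "g (Suc k) = (SOME m. m > g k \<and> H (g k) \<subset> H m)" unfolding g_def by simp
    then show ?thesis using someI_ex[OF step[of "g k"]] by simp
  qed
  then have "strict_mono g" by (simp add: strict_mono_Suc_iff)
  then have kg: "k \<le> g k" for k by (simp add: strict_mono_imp_increasing)
  have "(\<Union>k. H (g k)) = carrier G"
  proof
    show "(\<Union>k. H (g k)) \<subseteq> carrier G" using un by blast
    show "carrier G \<subseteq> (\<Union>k. H (g k))"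
    proof
      fix x assume "x \<in> carrier G"
      then obtain k where "x \<in> H k" using un by blast
      then have "x \<in> H (g k)" using seq_mono[OF mono kg[of k]] by blast
      then show "x \<in> (\<Union>k. H (g k))" by blast
    qed
  qed
  moreover have "\<forall>k. subgroup (H (g k)) G" "\<forall>k. H (g k) \<subset> H (g (Suc k))"
    using sg gs by auto
  ultimately have "\<exists>H' :: nat \<Rightarrow> 'a set. (\<forall>n. subgroup (H' n) G) \<and> (\<forall>n. H' n \<subset> H' (Suc n)) \<and> (\<Union>n. H' n) = carrier G"
    by (intro exI[of _ "\<lambda>k. H (g k)"]) simp
  then show False using uc unfolding uncountable_cofinality_def by blast
qed

lemma SB_imp_UC:
  assumes "SB_generated G" shows "uncountable_cofinality G"
  unfolding uncountable_cofinality_def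
proof
  assume "\<exists>H :: nat \<Rightarrow> 'a set. (\<forall>n. subgroup (H n) G) \<and> (\<forall>n. H n \<subset> H (Suc n)) \<and> (\<Union>n. H n) = carrier G"
  then obtain H :: "nat \<Rightarrow> 'a set" where sg: "\<forall>n. subgroup (H n) G" and st: "\<forall>n. H n \<subset> H (Suc n)"
    and un: "(\<Union>n. H n) = carrier G" by blast
  have sgn: "subgroup (H n) G" for n using sg by blast
  have mono: "\<forall>n. H n \<subseteq> H (Suc n)" using st by blast
  have monoH: "H i \<subseteq> H j" if "i \<le> j" for i j by (rule seq_mono[OF mono that])
  define lvl where "lvl z = (LEAST n. z \<in> H n)" for z
  have lvl_in: "z \<in> H (lvl z)" if "z \<in> carrier G" for z
  proof -
    have "\<exists>n. z \<in> H n" using un that by blast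
    then show ?thesis unfolding lvl_def by (rule LeastI_ex)
  qed
  have lvl_le: "lvl z \<le> n" if "z \<in> H n" for z n
    unfolding lvl_def using that by (rule Least_le)
  have lvl_sym: "lvl (inv z) = lvl z" if z: "z \<in> carrier G" for z
  proof -
    have "inv z \<in> H (lvl z)" by (rule subgroup.m_inv_closed[OF sgn lvl_in[OF z]])
    then have 1: "lvl (inv z) \<le> lvl z" by (rule lvl_le)
    have "inv (inv z) \<in> H (lvl (inv z))"
      by (rule subgroup.m_inv_closed[OF sgn lvl_in[OF inv_closed[OF z]]])
    then have "z \<in> H (lvl (inv z))" using z by simp
    then have 2: "lvl z \<le> lvl (inv z)" by (rule lvl_le)
    show ?thesis using 1 2 by simp
  qed
  have lvl_mult: "lvl (x \<otimes> y) \<le> max (lvl x) (lvl y)" if xy: "x \<in> carrier G" "y \<in> carrier G" for x y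
  proof -
    have "x \<in> H (max (lvl x) (lvl y))" using lvl_in[OF xy(1)] monoH[of "lvl x" "max (lvl x) (lvl y)"] by auto
    moreover have "y \<in> H (max (lvl x) (lvl y))" using lvl_in[OF xy(2)] monoH[of "lvl y" "max (lvl x) (lvl y)"] by auto
    ultimately have "x \<otimes> y \<in> H (max (lvl x) (lvl y))" by (rule subgroup.m_closed[OF sgn])
    then show ?thesis by (rule lvl_le)
  qed
  define d where "d x y = (if x = y then 0 else real (lvl (inv x \<otimes> y)) + 1)" for x y
  have metric: "left_inv_metric G d"
    unfolding left_inv_metric_def
  proof (intro conjI ballI)
    fix x y assume xy: "x \<in> carrier G" "y \<in> carrier G"
    show "(d x y = 0) = (x = y)" unfolding d_def by simp
    have e: "inv y \<otimes> x = inv (inv x \<otimes> y)" using xy by (simp add: inv_mult_group)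
    have "lvl (inv y \<otimes> x) = lvl (inv x \<otimes> y)" unfolding e by (rule lvl_sym) (use xy in simp)
    then show "d x y = d y x" unfolding d_def by auto
  next
    fix x y z assume xyz: "x \<in> carrier G" "y \<in> carrier G" "z \<in> carrier G"
    have e: "inv x \<otimes> z = (inv x \<otimes> y) \<otimes> (inv y \<otimes> z)"
    proof -
      have "(inv x \<otimes> y) \<otimes> (inv y \<otimes> z) = inv x \<otimes> (y \<otimes> (inv y \<otimes> z))"
        using xyz by (simp add: m_assoc)
      also have "y \<otimes> (inv y \<otimes> z) = z" using xyz by (simp add: m_assoc[symmetric])
      finally show ?thesis by simp
    qed
    have "lvl (inv x \<otimes> z) \<le> max (lvl (inv x \<otimes> y)) (lvl (inv y \<otimes> z))"
      unfolding e by (rule lvl_mult) (use xyz in simp_all)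
    then show "d x z \<le> d x y + d y z" unfolding d_def by auto
  next
    fix g x y assume gxy: "g \<in> carrier G" "x \<in> carrier G" "y \<in> carrier G"
    have "inv (g \<otimes> x) \<otimes> (g \<otimes> y) = inv x \<otimes> (inv g \<otimes> (g \<otimes> y))"
      using gxy by (simp add: inv_mult_group m_assoc)
    also have "inv g \<otimes> (g \<otimes> y) = y" using gxy by (simp add: m_assoc[symmetric])
    finally have "inv (g \<otimes> x) \<otimes> (g \<otimes> y) = inv x \<otimes> y" .
    moreover have "(g \<otimes> x = g \<otimes> y) = (x = y)" using gxy by simp
    ultimately show "d (g \<otimes> x) (g \<otimes> y) = d x y" unfolding d_def by simp
  qed
  obtain S where S: "strongly_bounded G S" "generate G S = carrier G"
    using assms unfolding SB_generated_def by blast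
  have Ssub: "S \<subseteq> carrier G" using S(1) unfolding strongly_bounded_def by blast
  obtain C where C: "\<forall>x\<in>S. \<forall>y\<in>S. d x y \<le> C" using S(1) metric unfolding strongly_bounded_def by blast
  have "\<exists>n. S \<subseteq> H n"
  proof (cases "S = {}")
    case True then show ?thesis by blast
  next
    case False
    then obtain s0 where s0: "s0 \<in> S" by blast
    have s0c: "s0 \<in> carrier G" using Ssub s0 by blast
    define N where "N = max (lvl s0) (nat \<lceil>C\<rceil>)"
    have s0N: "s0 \<in> H N" using lvl_in[OF s0c] monoH[of "lvl s0" N] unfolding N_def by auto
    have "s \<in> H N" if s: "s \<in> S" for s
    proof (cases "s = s0")
      case True
      then show ?thesis using s0N by simp
    next
      case False
      have sc: "s \<in> carrier G" using Ssub s by blast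
      have "d s0 s \<le> C" using C s s0 by blast
      then have "real (lvl (inv s0 \<otimes> s)) + 1 \<le> C" unfolding d_def using False by auto
      then have "lvl (inv s0 \<otimes> s) \<le> nat \<lceil>C\<rceil>" by linarith
      then have "lvl (inv s0 \<otimes> s) \<le> N" unfolding N_def by simp
      then have "inv s0 \<otimes> s \<in> H N" using lvl_in[of "inv s0 \<otimes> s"] sc s0c monoH[of "lvl (inv s0 \<otimes> s)" N]
        by auto
      with s0N have "s0 \<otimes> (inv s0 \<otimes> s) \<in> H N" by (rule subgroup.m_closed[OF sgn])
      moreover have "s0 \<otimes> (inv s0 \<otimes> s) = s" using sc s0c by (simp add: m_assoc[symmetric])
      ultimately show ?thesis by simp
    qed
    then show ?thesis by blast
  qed
  then obtain n where "S \<subseteq> H n" by blast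
  then have "generate G S \<subseteq> H n" by (rule generate_subgroup_incl[OF _ sgn])
  then have "carrier G \<subseteq> H n" using S(2) by simp
  moreover have "H (Suc n) \<subseteq> carrier G" by (rule subgroup.subset[OF sgn])
  ultimately show False using st by blast
qed

end

lemma fg_imp_SB:
  assumes "group G" "finitely_generated G" shows "SB_generated G"
proof -
  obtain S where S: "finite S" "S \<subseteq> carrier G" "generate G S = carrier G"
    using assms(2) unfolding finitely_generated_def by blast
  have "strongly_bounded G S"
    unfolding strongly_bounded_def
  proof (intro conjI allI impI)
    show "S \<subseteq> carrier G" by fact
    fix d :: "'a \<Rightarrow> 'a \<Rightarrow> real"
    show "\<exists>C. \<forall>x\<in>S. \<forall>y\<in>S. d x y \<le> C"
    proof (intro exI ballI)
      fix x y assume "x \<in> S" "y \<in> S"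
      then have "(x, y) \<in> S \<times> S" by blast
      then have "\<bar>d x y\<bar> \<le> (\<Sum>p\<in>S \<times> S. \<bar>case_prod d p\<bar>)"
        using member_le_sum[of "(x,y)" "S \<times> S" "\<lambda>p. \<bar>case_prod d p\<bar>"] S(1) by auto
      then show "d x y \<le> (\<Sum>p\<in>S \<times> S. \<bar>case_prod d p\<bar>)" by linarith
    qed
  qed
  then show ?thesis using S unfolding SB_generated_def by blast
qed


context comm_group begin

lemma maxK:
  assumes D: "\<forall>n. subgroup (D n) G" "\<forall>n. D n \<subseteq> D (Suc n)"
    and E: "subgroup E G" "E \<subseteq> D 0"
  shows "\<exists>K. subgroup K G \<and> E \<subseteq> K \<and> K \<inter> (\<Union>n. D n) \<subseteq> D 0 \<and>
    (\<forall>a\<in>carrier G. a \<in> K <#> (\<Union>n. D n) \<or>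
       (\<exists>t::int. \<exists>k\<in>K. \<exists>c\<in>(\<Union>n. D n) - D 0. a [^] t = k \<otimes> c))"
proof -
  define C where "C = (\<Union>n. D n)"
  have C: "subgroup C G" unfolding C_def by (rule seq_Union_subgroup[OF D])
  define AA where "AA = {K. subgroup K G \<and> E \<subseteq> K \<and> K \<inter> C \<subseteq> D 0}"
  have "E \<in> AA" unfolding AA_def using E by auto
  then have "AA \<noteq> {}" by blast
  moreover have "\<Union>CC \<in> AA" if "CC \<noteq> {}" "subset.chain AA CC" for CC
  proof -
    have ch: "CC \<subseteq> AA" "\<forall>K1\<in>CC. \<forall>K2\<in>CC. K1 \<subseteq> K2 \<or> K2 \<subseteq> K1"
      using that(2) unfolding subset.chain_def by auto
    have chs: "\<forall>K\<in>CC. subgroup K G" "\<forall>K\<in>CC. E \<subseteq> K" "\<forall>K\<in>CC. K \<inter> C \<subseteq> D 0"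
      using ch(1) unfolding AA_def by auto
    have "subgroup (\<Union>CC) G"
      by (rule chain_Union_subgroup[OF that(1) chs(1) ch(2)])
    moreover have "E \<subseteq> \<Union>CC" using chs(2) that(1) by blast
    moreover have "(\<Union>CC) \<inter> C \<subseteq> D 0" using chs(3) by blast
    ultimately show ?thesis unfolding AA_def by simp
  qed
  ultimately have "\<exists>M\<in>AA. \<forall>Y\<in>AA. M \<subseteq> Y \<longrightarrow> Y = M"
    by (rule subset_Zorn_nonempty[of AA])
  then obtain KM where KM: "KM \<in> AA" and Mmax: "\<forall>Y\<in>AA. KM \<subseteq> Y \<longrightarrow> Y = KM"
    by blast
  have Msg: "subgroup KM G" "E \<subseteq> KM" "KM \<inter> C \<subseteq> D 0" using KM unfolding AA_def by auto
  have all: "a \<in> KM <#> C \<or> (\<exists>t::int. \<exists>k\<in>KM. \<exists>c\<in>C - D 0. a [^] t = k \<otimes> c)" if a: "a \<in> carrier G" for a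
  proof (cases "a \<in> KM <#> C")
    case True then show ?thesis by blast
  next
    case False
    define K' where "K' = KM <#> generate G {a}"
    have ga: "subgroup (generate G {a}) G" by (rule generate_is_subgroup) (use a in simp)
    have K'sg: "subgroup K' G" unfolding K'_def by (rule mult_subgroups[OF Msg(1) ga])
    have "KM \<subseteq> K'"
    proof
      fix x assume "x \<in> KM"
      have xc: "x \<in> carrier G" by (rule subgroup.mem_carrier[OF Msg(1) \<open>x \<in> KM\<close>])
      have "x \<otimes> \<one> \<in> K'" unfolding K'_def set_mult_def
        using \<open>x \<in> KM\<close> subgroup.one_closed[OF ga] by blast
      then show "x \<in> K'" using xc by simp
    qed
    have "\<one> \<otimes> a \<in> K'" unfolding K'_def set_mult_def
      using subgroup.one_closed[OF Msg(1)] generate.incl[of a "{a}" G] by blast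
    then have "a \<in> K'" using a by simp
    have "KM \<subseteq> KM <#> C"
    proof
      fix x assume "x \<in> KM"
      have xc: "x \<in> carrier G" by (rule subgroup.mem_carrier[OF Msg(1) \<open>x \<in> KM\<close>])
      have "x \<otimes> \<one> \<in> KM <#> C" unfolding set_mult_def
        using \<open>x \<in> KM\<close> subgroup.one_closed[OF C] by blast
      then show "x \<in> KM <#> C" using xc by simp
    qed
    then have "a \<notin> KM" using False by blast
    then have "K' \<noteq> KM" using \<open>a \<in> K'\<close> by blast
    then have "K' \<notin> AA" using Mmax \<open>KM \<subseteq> K'\<close> by blast
    then have nA: "\<not> (subgroup K' G \<and> E \<subseteq> K' \<and> K' \<inter> C \<subseteq> D 0)"
      unfolding AA_def by simp
    have "E \<subseteq> K'" using Msg(2) \<open>KM \<subseteq> K'\<close> by blast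
    then have "\<not> K' \<inter> C \<subseteq> D 0" using K'sg nA by blast
    then obtain y where y: "y \<in> K'" "y \<in> C" "y \<notin> D 0" by blast
    then obtain m g where mg: "m \<in> KM" "g \<in> generate G {a}" "y = m \<otimes> g"
      unfolding K'_def set_mult_def by blast
    have "g \<in> {a [^] (k::int) | k. k \<in> UNIV}" using mg(2) unfolding generate_pow[OF a] .
    then obtain t :: int where t: "g = a [^] t" by blast
    have mc: "m \<in> carrier G" by (rule subgroup.mem_carrier[OF Msg(1) mg(1)])
    have yc: "y \<in> carrier G" by (rule subgroup.mem_carrier[OF K'sg y(1)])
    have yeq: "y = m \<otimes> a [^] t" using mg(3) t by simp
    have "a [^] t = inv m \<otimes> y"
      using inv_solve_left[of "a [^] t" m y] yc mc int_pow_closed[OF a, of t] yeq by blast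
    moreover have "inv m \<in> KM" by (rule subgroup.m_inv_closed[OF Msg(1) mg(1)])
    ultimately show ?thesis using y by blast
  qed
  show ?thesis
  proof (intro exI[of _ KM] conjI ballI)
    show "subgroup KM G" by (rule Msg(1))
    show "E \<subseteq> KM" by (rule Msg(2))
    show "KM \<inter> (\<Union>n. D n) \<subseteq> D 0" using Msg(3) unfolding C_def .
    fix a assume a: "a \<in> carrier G"
    show "a \<in> KM <#> (\<Union>n. D n) \<or> (\<exists>t::int. \<exists>k\<in>KM. \<exists>c\<in>(\<Union>n. D n) - D 0. a [^] t = k \<otimes> c)"
      using all[OF a] unfolding C_def .
  qed
qed

end


context comm_group begin

lemma subgroup_nat_pow_closed:
  assumes "subgroup H G" "h \<in> H" shows "h [^] (n::nat) \<in> H"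
  using subgroup_int_pow_closed[OF assms, of "int n"] by (simp add: int_pow_int)

lemma powpre_subgroup:
  assumes Q: "subgroup Q G"
  shows "subgroup {a \<in> carrier G. a [^] (N::nat) \<in> Q} G"
proof (rule subgroup.intro)
  show "{a \<in> carrier G. a [^] N \<in> Q} \<subseteq> carrier G" by blast
  show "\<one> \<in> {a \<in> carrier G. a [^] N \<in> Q}" using subgroup.one_closed[OF Q] by simp
next
  fix x y assume x: "x \<in> {a \<in> carrier G. a [^] N \<in> Q}" and y: "y \<in> {a \<in> carrier G. a [^] N \<in> Q}"
  then have xc: "x \<in> carrier G" "x [^] N \<in> Q" and yc: "y \<in> carrier G" "y [^] N \<in> Q" by auto
  have "(x \<otimes> y) [^] N = x [^] N \<otimes> y [^] N"
    by (rule pow_mult_distrib[OF m_comm[OF xc(1) yc(1)] xc(1) yc(1)])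
  moreover have "x [^] N \<otimes> y [^] N \<in> Q" by (rule subgroup.m_closed[OF Q xc(2) yc(2)])
  ultimately show "x \<otimes> y \<in> {a \<in> carrier G. a [^] N \<in> Q}" using xc yc by simp
next
  fix x assume x: "x \<in> {a \<in> carrier G. a [^] N \<in> Q}"
  then have xc: "x \<in> carrier G" "x [^] N \<in> Q" by auto
  have "inv x [^] N = inv (x [^] N)" by (rule nat_pow_inv[OF xc(1)])
  moreover have "inv (x [^] N) \<in> Q" by (rule subgroup.m_inv_closed[OF Q xc(2)])
  ultimately show "inv x \<in> {a \<in> carrier G. a [^] N \<in> Q}" using xc by simp
qed

lemma absorb:
  assumes C: "subgroup C G" and K: "subgroup K G" and KC: "K \<inter> C \<subseteq> D0"
    and Dn: "subgroup Dn G" "D0 \<subseteq> Dn" "Dn \<subseteq> C"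
    and k: "k \<in> K" and c: "c \<in> Dn" and kc: "k \<otimes> c \<in> C"
  shows "k \<otimes> c \<in> Dn"
proof -
  have kcar: "k \<in> carrier G" by (rule subgroup.mem_carrier[OF K k])
  have ccar: "c \<in> carrier G" by (rule subgroup.mem_carrier[OF Dn(1) c])
  have "inv c \<in> C" using subgroup.m_inv_closed[OF C] c Dn(3) by blast
  then have "(k \<otimes> c) \<otimes> inv c \<in> C" by (rule subgroup.m_closed[OF C kc])
  moreover have "(k \<otimes> c) \<otimes> inv c = k" using kcar ccar by (simp add: m_assoc)
  ultimately have "k \<in> C" by simp
  then have "k \<in> Dn" using k KC Dn(2) by blast
  then show ?thesis by (rule subgroup.m_closed[OF Dn(1) _ c])
qed

lemma lemZ:
  assumes uc: "uncountable_cofinality G" and D: "\<forall>n. subgroup (D n) G" "\<forall>n. D n \<subseteq> D (Suc n)"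
  shows "\<exists>N n. N > 0 \<and> (\<forall>j. \<forall>x\<in>D j. x [^] (N::nat) \<in> D n)"
proof -
  define C where "C = (\<Union>n. D n)"
  have Csg: "subgroup C G" unfolding C_def by (rule seq_Union_subgroup[OF D])
  have Dsg: "subgroup (D n) G" for n using D(1) by blast
  have DC: "D n \<subseteq> C" for n unfolding C_def by blast
  have monoD: "D i \<subseteq> D j" if "i \<le> j" for i j by (rule seq_mono[OF D(2) that])
  have E: "subgroup {\<one>} G" "{\<one>} \<subseteq> D 0" using triv_subgroup subgroup.one_closed[OF Dsg] by auto
  obtain K where K: "subgroup K G" "K \<inter> C \<subseteq> D 0"
    and all: "\<forall>a\<in>carrier G. a \<in> K <#> C \<or> (\<exists>t::int. \<exists>k\<in>K. \<exists>c\<in>C - D 0. a [^] t = k \<otimes> c)"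
    using maxK[OF D E] unfolding C_def by blast
  have KCsg: "subgroup (K <#> C) G" by (rule mult_subgroups[OF K(1) Csg])
  have tpos: "\<exists>t::nat. t > 0 \<and> a [^] t \<in> K <#> C" if a: "a \<in> carrier G" for a
  proof (cases "a \<in> K <#> C")
    case True
    then show ?thesis using a by (intro exI[of _ 1]) simp
  next
    case False
    then obtain t :: int and k c where tkc: "k \<in> K" "c \<in> C" "c \<notin> D 0" "a [^] t = k \<otimes> c"
      using all a by blast
    have kc: "k \<otimes> c \<in> K <#> C" unfolding set_mult_def using tkc by blast
    have kcar: "k \<in> carrier G" by (rule subgroup.mem_carrier[OF K(1) tkc(1)])
    have ccar: "c \<in> carrier G" by (rule subgroup.mem_carrier[OF Csg tkc(2)])
    have "t \<noteq> 0"
    proof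
      assume "t = 0"
      then have "\<one> = k \<otimes> c" using tkc(4) by simp
      then have "c \<otimes> k = \<one>" using kcar ccar by (simp add: m_comm)
      then have "inv k = c" using kcar ccar by (rule inv_equality)
      then have "c = inv k" by simp
      then have "c \<in> K" using subgroup.m_inv_closed[OF K(1) tkc(1)] by simp
      then show False using tkc K(2) by blast
    qed
    show ?thesis
    proof (cases "t > 0")
      case True
      have "a [^] nat t = a [^] t" using True by (simp add: pow_nat)
      then show ?thesis using True kc tkc(4) by (intro exI[of _ "nat t"]) simp
    next
      case False
      then have "- t > 0" using \<open>t \<noteq> 0\<close> by simp
      have "a [^] nat (- t) = a [^] (- t)" using \<open>- t > 0\<close> by (simp add: pow_nat)
      also have "\<dots> = inv (a [^] t)" using a by (rule int_pow_neg)
      finally have "a [^] nat (- t) = inv (k \<otimes> c)" using tkc(4) by simp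
      moreover have "inv (k \<otimes> c) \<in> K <#> C" by (rule subgroup.m_inv_closed[OF KCsg kc])
      ultimately show ?thesis using \<open>- t > 0\<close> by (intro exI[of _ "nat (- t)"]) simp
    qed
  qed
  define H where "H n = {a \<in> carrier G. a [^] (fact n :: nat) \<in> K <#> D n}" for n
  have KDsg: "subgroup (K <#> D n) G" for n by (rule mult_subgroups[OF K(1) Dsg])
  have Hsg: "\<forall>n. subgroup (H n) G" unfolding H_def using powpre_subgroup[OF KDsg] by blast
  have KDmono: "K <#> D i \<subseteq> K <#> D j" if "i \<le> j" for i j
    by (rule mono_set_mult) (auto simp: monoD[OF that])
  have Hmono: "\<forall>n. H n \<subseteq> H (Suc n)"
  proof (intro allI subsetI)
    fix n a assume "a \<in> H n"
    then have a: "a \<in> carrier G" "a [^] (fact n :: nat) \<in> K <#> D n" unfolding H_def by auto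
    have "(a [^] (fact n :: nat)) [^] (Suc n) \<in> K <#> D n"
      by (rule subgroup_nat_pow_closed[OF KDsg a(2)])
    moreover have "(a [^] (fact n :: nat)) [^] (Suc n) = a [^] (fact (Suc n) :: nat)"
    proof -
      have "(a [^] (fact n :: nat)) [^] (Suc n) = a [^] ((fact n :: nat) * Suc n)" by (rule nat_pow_pow[OF a(1)])
      also have "(fact n :: nat) * Suc n = fact (Suc n)" by (simp add: mult.commute)
      finally show ?thesis .
    qed
    ultimately have "a [^] (fact (Suc n) :: nat) \<in> K <#> D (Suc n)" using KDmono[of n "Suc n"] by auto
    then show "a \<in> H (Suc n)" unfolding H_def using a by simp
  qed
  have Hun: "(\<Union>n. H n) = carrier G"
  proof
    show "(\<Union>n. H n) \<subseteq> carrier G" unfolding H_def by blast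
    show "carrier G \<subseteq> (\<Union>n. H n)"
    proof
      fix a assume a: "a \<in> carrier G"
      obtain t :: nat where t: "t > 0" "a [^] t \<in> K <#> C" using tpos[OF a] by blast
      then obtain k c where kc: "k \<in> K" "c \<in> C" "a [^] t = k \<otimes> c" unfolding set_mult_def by blast
      then obtain j where j: "c \<in> D j" unfolding C_def by blast
      define n where "n = max t j"
      have "k \<otimes> c \<in> K <#> D j" unfolding set_mult_def using kc j by blast
      then have "a [^] t \<in> K <#> D n" using KDmono[of j n] kc(3) unfolding n_def by auto
      then have "(a [^] t) [^] (fact n div t) \<in> K <#> D n" by (rule subgroup_nat_pow_closed[OF KDsg])
      moreover have "t dvd fact n" using t(1) unfolding n_def by (intro dvd_fact) auto
      then have "t * (fact n div t) = fact n" by simp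
      ultimately have "a [^] (fact n :: nat) \<in> K <#> D n" using a by (simp add: nat_pow_pow)
      then have "a \<in> H n" unfolding H_def using a by simp
      then show "a \<in> (\<Union>n. H n)" by blast
    qed
  qed
  obtain n where n: "H n = carrier G" using UC_stable[OF uc Hsg Hmono Hun] by blast
  have "\<forall>j. \<forall>x\<in>D j. x [^] (fact n :: nat) \<in> D n"
  proof (intro allI ballI)
    fix j x assume x: "x \<in> D j"
    have xc: "x \<in> carrier G" by (rule subgroup.mem_carrier[OF Dsg x])
    then have "x [^] (fact n :: nat) \<in> K <#> D n" using n unfolding H_def by blast
    then obtain k c where kc: "k \<in> K" "c \<in> D n" "x [^] (fact n :: nat) = k \<otimes> c"
      unfolding set_mult_def by blast
    have "x [^] (fact n :: nat) \<in> C" using subgroup_nat_pow_closed[OF Dsg x] DC by blast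
    then have "k \<otimes> c \<in> C" using kc(3) by simp
    then have "k \<otimes> c \<in> D n" by (rule absorb[OF Csg K(1) K(2) Dsg monoD[OF le0] DC kc(1) kc(2)])
    then show "x [^] (fact n :: nat) \<in> D n" using kc(3) by simp
  qed
  then show ?thesis by (intro exI[of _ "fact n"] exI[of _ n]) simp
qed

end


context comm_group begin

lemma lemP:
  assumes uc: "uncountable_cofinality G" and D: "\<forall>n. subgroup (D n) G" "\<forall>n. D n \<subseteq> D (Suc n)"
    and p: "Factorial_Ring.prime (p::nat)" and pD: "\<forall>a\<in>carrier G. a [^] p \<in> D 0"
  shows "\<exists>n. \<forall>j. D j \<subseteq> D n"
proof -
  define C where "C = (\<Union>n. D n)"
  have Csg: "subgroup C G" unfolding C_def by (rule seq_Union_subgroup[OF D])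
  have Dsg: "subgroup (D n) G" for n using D(1) by blast
  have DC: "D n \<subseteq> C" for n unfolding C_def by blast
  have monoD: "D i \<subseteq> D j" if "i \<le> j" for i j by (rule seq_mono[OF D(2) that])
  define P where "P = (\<lambda>a. a [^] p) ` carrier G"
  have Psub: "P \<subseteq> carrier G" unfolding P_def by auto
  define E where "E = generate G P"
  have Esg: "subgroup E G" unfolding E_def by (rule generate_is_subgroup[OF Psub])
  have PD: "P \<subseteq> D 0" unfolding P_def using pD by blast
  have ED: "E \<subseteq> D 0" unfolding E_def by (rule generate_subgroup_incl[OF PD Dsg])
  have apE: "a [^] p \<in> E" if a: "a \<in> carrier G" for a
  proof -
    have "a [^] p \<in> P" unfolding P_def using a by blast
    then show ?thesis unfolding E_def by (rule generate.incl)
  qed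
  obtain K where K: "subgroup K G" "E \<subseteq> K" "K \<inter> C \<subseteq> D 0"
    and all: "\<forall>a\<in>carrier G. a \<in> K <#> C \<or> (\<exists>t::int. \<exists>k\<in>K. \<exists>c\<in>C - D 0. a [^] t = k \<otimes> c)"
    using maxK[OF D Esg ED] unfolding C_def by blast
  have KCsg: "subgroup (K <#> C) G" by (rule mult_subgroups[OF K(1) Csg])
  have KsubKC: "K \<subseteq> K <#> C"
  proof
    fix x assume "x \<in> K"
    have xc: "x \<in> carrier G" by (rule subgroup.mem_carrier[OF K(1) \<open>x \<in> K\<close>])
    have "x \<otimes> \<one> \<in> K <#> C" unfolding set_mult_def
      using \<open>x \<in> K\<close> subgroup.one_closed[OF Csg] by blast
    then show "x \<in> K <#> C" using xc by simp
  qed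
  have inKC: "a \<in> K <#> C" if a: "a \<in> carrier G" for a
  proof (rule ccontr)
    assume nin: "a \<notin> K <#> C"
    then obtain t :: int and k c where tkc: "k \<in> K" "c \<in> C" "c \<notin> D 0" "a [^] t = k \<otimes> c"
      using all a by blast
    have kc: "k \<otimes> c \<in> K <#> C" unfolding set_mult_def using tkc by blast
    have kcar: "k \<in> carrier G" by (rule subgroup.mem_carrier[OF K(1) tkc(1)])
    have ccar: "c \<in> carrier G" by (rule subgroup.mem_carrier[OF Csg tkc(2)])
    have apK: "a [^] (int p) \<in> K" using apE[OF a] K(2) by (simp add: int_pow_int subset_iff)
    have ndvd: "\<not> int p dvd t"
    proof
      assume "int p dvd t"
      then obtain s where s: "t = int p * s" by (auto elim: dvdE)
      have "a [^] t = (a [^] (int p)) [^] s" using s a by (simp add: int_pow_pow)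
      moreover have "(a [^] (int p)) [^] s \<in> K" by (rule subgroup_int_pow_closed[OF K(1) apK])
      ultimately have "k \<otimes> c \<in> K" using tkc(4) by simp
      moreover have "inv k \<in> K" by (rule subgroup.m_inv_closed[OF K(1) tkc(1)])
      ultimately have "inv k \<otimes> (k \<otimes> c) \<in> K" using subgroup.m_closed[OF K(1)] by blast
      moreover have "inv k \<otimes> (k \<otimes> c) = c" using kcar ccar by (simp add: m_assoc[symmetric])
      ultimately have "c \<in> K" by simp
      then show False using tkc K(3) by blast
    qed
    have "Factorial_Ring.prime (int p)" using p by simp
    then have "coprime (int p) t" using ndvd by (rule prime_imp_coprime)
    then have "gcd (int p) t = 1" by (simp add: coprime_iff_gcd_eq_1)
    then obtain u v where uv: "u * int p + v * t = 1" using bezout_int[of "int p" t] by auto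
    have "a = a [^] (1::int)" using a by simp
    also have "\<dots> = a [^] (u * int p) \<otimes> a [^] (v * t)" unfolding uv[symmetric] by (rule int_pow_mult[OF a])
    also have "a [^] (u * int p) = (a [^] (int p)) [^] u" using a by (simp add: int_pow_pow mult.commute)
    also have "a [^] (v * t) = (a [^] t) [^] v" using a by (simp add: int_pow_pow mult.commute)
    finally have aeq: "a = (a [^] (int p)) [^] u \<otimes> (k \<otimes> c) [^] v" using tkc(4) by simp
    have "(a [^] (int p)) [^] u \<in> K <#> C" using subgroup_int_pow_closed[OF K(1) apK] KsubKC by blast
    moreover have "(k \<otimes> c) [^] v \<in> K <#> C" by (rule subgroup_int_pow_closed[OF KCsg kc])
    ultimately have "(a [^] (int p)) [^] u \<otimes> (k \<otimes> c) [^] v \<in> K <#> C" by (rule subgroup.m_closed[OF KCsg])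
    then show False using aeq nin by simp
  qed
  define H where "H n = K <#> D n" for n
  have Hsg: "\<forall>n. subgroup (H n) G" unfolding H_def using mult_subgroups[OF K(1) Dsg] by blast
  have KDmono: "K <#> D i \<subseteq> K <#> D j" if "i \<le> j" for i j
    by (rule mono_set_mult) (auto simp: monoD[OF that])
  have Hmono: "\<forall>n. H n \<subseteq> H (Suc n)" unfolding H_def using KDmono by simp
  have Hun: "(\<Union>n. H n) = carrier G"
  proof
    show "(\<Union>n. H n) \<subseteq> carrier G" using Hsg subgroup.subset by blast
    show "carrier G \<subseteq> (\<Union>n. H n)"
    proof
      fix a assume a: "a \<in> carrier G"
      obtain k c where kc: "k \<in> K" "c \<in> C" "a = k \<otimes> c" using inKC[OF a] unfolding set_mult_def by blast
      then obtain j where j: "c \<in> D j" unfolding C_def by blast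
      have "a \<in> H j" unfolding H_def set_mult_def using kc j by blast
      then show "a \<in> (\<Union>n. H n)" by blast
    qed
  qed
  obtain n where n: "H n = carrier G" using UC_stable[OF uc Hsg Hmono Hun] by blast
  have "\<forall>j. D j \<subseteq> D n"
  proof (intro allI subsetI)
    fix j x assume x: "x \<in> D j"
    have xc: "x \<in> carrier G" by (rule subgroup.mem_carrier[OF Dsg x])
    then have "x \<in> K <#> D n" using n unfolding H_def by blast
    then obtain k c where kc: "k \<in> K" "c \<in> D n" "x = k \<otimes> c"
      unfolding set_mult_def by blast
    have "x \<in> C" using x DC by blast
    then have "k \<otimes> c \<in> C" using kc(3) by simp
    then have "k \<otimes> c \<in> D n" by (rule absorb[OF Csg K(1) K(3) Dsg monoD[OF le0] DC kc(1) kc(2)])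
    then show "x \<in> D n" using kc(3) by simp
  qed
  then show ?thesis by blast
qed

lemma build_seq:
  assumes S0: "finite S0" "S0 \<subseteq> carrier G"
    and ex: "\<And>n S. finite S \<Longrightarrow> S \<subseteq> carrier G \<Longrightarrow> \<exists>x\<in>carrier G. R n S x"
  shows "\<exists>T. T 0 = S0 \<and> (\<forall>n. finite (T n) \<and> T n \<subseteq> carrier G) \<and>
           (\<forall>n. \<exists>x\<in>carrier G. R n (T n) x \<and> T (Suc n) = insert x (T n))"
proof -
  define PP where "PP (n::nat) T = (finite T \<and> T \<subseteq> carrier G \<and> (n = 0 \<longrightarrow> T = S0))" for n T
  define QQ where "QQ (n::nat) T T' = (\<exists>x\<in>carrier G. R n T x \<and> T' = insert x T)" for n T T'
  have 1: "\<exists>x. PP 0 x" unfolding PP_def using S0 by blast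
  have 2: "\<exists>y. PP (Suc n) y \<and> QQ n x y" if "PP n x" for x n
  proof -
    have "finite x" "x \<subseteq> carrier G" using that unfolding PP_def by auto
    then obtain z where z: "z \<in> carrier G" "R n x z" using ex by blast
    show ?thesis unfolding PP_def QQ_def
      using z \<open>finite x\<close> \<open>x \<subseteq> carrier G\<close> by (intro exI[of _ "insert z x"]) auto
  qed
  obtain f where f: "\<forall>n. PP n (f n) \<and> QQ n (f n) (f (Suc n))"
    using dependent_nat_choice[of PP QQ, OF 1 2] by blast
  show ?thesis
    using f unfolding PP_def QQ_def by (intro exI[of _ f]) auto
qed

lemma step1:
  assumes uc: "uncountable_cofinality G"
  shows "\<exists>m S. m > 0 \<and> finite S \<and> S \<subseteq> carrier G \<and> (\<forall>a\<in>carrier G. a [^] (m::nat) \<in> generate G S)"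
proof (rule ccontr)
  assume "\<not> ?thesis"
  then have neg: "\<exists>x\<in>carrier G. x [^] (m::nat) \<notin> generate G S"
    if "m > 0" "finite S" "S \<subseteq> carrier G" for m S using that by blast
  have "\<exists>x\<in>carrier G. x [^] (fact (Suc n) :: nat) \<notin> generate G S"
    if "finite S" "S \<subseteq> carrier G" for n S using neg[OF _ that] by simp
  then obtain T where T: "\<forall>n. finite (T n) \<and> T n \<subseteq> carrier G"
    "\<forall>n. \<exists>x\<in>carrier G. x [^] (fact (Suc n) :: nat) \<notin> generate G (T n) \<and> T (Suc n) = insert x (T n)"
    using build_seq[of "{}" "\<lambda>n S x. x [^] (fact (Suc n) :: nat) \<notin> generate G S"] by blast
  define D where "D n = generate G (T n)" for n
  have Dsg: "\<forall>n. subgroup (D n) G" unfolding D_def using generate_is_subgroup T(1) by blast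
  have Dmono: "\<forall>n. D n \<subseteq> D (Suc n)"
  proof
    fix n
    have "T n \<subseteq> T (Suc n)" using T(2) by blast
    then show "D n \<subseteq> D (Suc n)" unfolding D_def by (rule mono_generate)
  qed
  obtain N n0 where N: "N > 0" "\<forall>j. \<forall>x\<in>D j. x [^] (N::nat) \<in> D n0"
    using lemZ[OF uc Dsg Dmono] by blast
  define n where "n = max N n0"
  obtain x where x: "x \<in> carrier G" "x [^] (fact (Suc n) :: nat) \<notin> D n" "T (Suc n) = insert x (T n)"
    using T(2) unfolding D_def by blast
  have "x \<in> D (Suc n)" unfolding D_def using x(3) generate.incl[of x "T (Suc n)" G] by blast
  then have "x [^] N \<in> D n0" using N(2) by blast
  then have xN: "x [^] N \<in> D n" using seq_mono[OF Dmono, of n0 n] unfolding n_def by auto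
  have "N dvd fact (Suc n)" using N(1) unfolding n_def by (intro dvd_fact) auto
  then have e: "N * (fact (Suc n) div N) = fact (Suc n)" by simp
  have "(x [^] N) [^] (fact (Suc n) div N) \<in> D n"
    using subgroup_nat_pow_closed[OF _ xN] Dsg by blast
  then have "x [^] (N * (fact (Suc n) div N)) \<in> D n" using x(1) by (simp add: nat_pow_pow)
  then show False using x(2) unfolding e by simp
qed

lemma step2:
  assumes uc: "uncountable_cofinality G"
  shows "m > 0 \<Longrightarrow> finite S \<Longrightarrow> S \<subseteq> carrier G \<Longrightarrow> (\<forall>a\<in>carrier G. a [^] (m::nat) \<in> generate G S)
    \<Longrightarrow> finitely_generated G"
proof (induction m arbitrary: S rule: less_induct)
  case (less m)
  show ?case
  proof (cases "m = 1")
    case True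
    then have "carrier G \<subseteq> generate G S" using less.prems(4) by auto
    moreover have "generate G S \<subseteq> carrier G" by (rule generate_incl[OF less.prems(3)])
    ultimately show ?thesis unfolding finitely_generated_def using less.prems(2,3) by blast
  next
    case False
    then obtain p where p: "Factorial_Ring.prime p" "p dvd m" using prime_factor_nat by blast
    then obtain m' where m': "m = p * m'" by (auto elim: dvdE)
    have "p > 1" using prime_gt_1_nat[OF p(1)] .
    then have m'pos: "m' > 0" and m'lt: "m' < m" using less.prems(1) m' by auto
    have "\<exists>S'. finite S' \<and> S' \<subseteq> carrier G \<and> (\<forall>a\<in>carrier G. a [^] m' \<in> generate G S')"
    proof (rule ccontr)
      assume "\<not> ?thesis"
      then have neg: "\<exists>x\<in>carrier G. x [^] m' \<notin> generate G S'"
        if "finite S'" "S' \<subseteq> carrier G" for S' using that by blast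
      have "\<exists>y\<in>carrier G. y \<notin> generate G S' \<and> (\<exists>x\<in>carrier G. y = x [^] m')"
        if S'h: "finite S'" "S' \<subseteq> carrier G" for n S'
      proof -
        obtain x where "x \<in> carrier G" "x [^] m' \<notin> generate G S'" using neg[OF S'h] by blast
        then show ?thesis by (intro bexI[of _ "x [^] m'"]) auto
      qed
      then obtain T where T: "T 0 = S" "\<forall>n. finite (T n) \<and> T n \<subseteq> carrier G"
        "\<forall>n. \<exists>y\<in>carrier G. (y \<notin> generate G (T n) \<and> (\<exists>x\<in>carrier G. y = x [^] m')) \<and> T (Suc n) = insert y (T n)"
        using build_seq[of S "\<lambda>n S' y. y \<notin> generate G S' \<and> (\<exists>x\<in>carrier G. y = x [^] m')", OF less.prems(2,3)]
        by blast
      define D where "D n = {a \<in> carrier G. a [^] m' \<in> generate G (T n)}" for n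
      have Dsg: "\<forall>n. subgroup (D n) G"
        unfolding D_def using powpre_subgroup generate_is_subgroup T(2) by blast
      have Dmono: "\<forall>n. D n \<subseteq> D (Suc n)"
      proof
        fix n
        have "T n \<subseteq> T (Suc n)" using T(3) by blast
        then have "generate G (T n) \<subseteq> generate G (T (Suc n))" by (rule mono_generate)
        then show "D n \<subseteq> D (Suc n)" unfolding D_def by blast
      qed
      have pD: "\<forall>a\<in>carrier G. a [^] p \<in> D 0"
      proof
        fix a assume a: "a \<in> carrier G"
        have "(a [^] p) [^] m' = a [^] m" using a m' by (simp add: nat_pow_pow)
        then show "a [^] p \<in> D 0" unfolding D_def using T(1) less.prems(4) a by simp
      qed
      obtain n where n: "\<forall>j. D j \<subseteq> D n" using lemP[OF uc Dsg Dmono p(1) pD] by blast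
      obtain y x where yx: "y \<notin> generate G (T n)" "x \<in> carrier G" "y = x [^] m'" "T (Suc n) = insert y (T n)"
        using T(3) by blast
      have "y \<in> generate G (T (Suc n))" using yx(4) generate.incl[of y "T (Suc n)" G] by blast
      then have "x \<in> D (Suc n)" unfolding D_def using yx by simp
      then have "x \<in> D n" using n by blast
      then show False unfolding D_def using yx by simp
    qed
    then obtain S' where S': "finite S'" "S' \<subseteq> carrier G" "\<forall>a\<in>carrier G. a [^] m' \<in> generate G S'" by blast
    show ?thesis by (rule less.IH[OF m'lt m'pos S'])
  qed
qed

lemma UC_imp_fg:
  assumes uc: "uncountable_cofinality G" shows "finitely_generated G"
proof -
  obtain m S where mS: "m > 0" "finite S" "S \<subseteq> carrier G" "\<forall>a\<in>carrier G. a [^] (m::nat) \<in> generate G S"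
    using step1[OF uc] by blast
  show ?thesis by (rule step2[OF uc mS])
qed

end

theorem proposition2p7:
  fixes A :: "('a, 'b) monoid_scheme"
  assumes "comm_group A"
  shows "(finitely_generated A \<longleftrightarrow> SB_generated A) \<and>
         (SB_generated A \<longleftrightarrow> uncountable_cofinality A)"
proof -
  have g: "group A" using assms comm_group.axioms(2) by blast
  have 1: "finitely_generated A \<Longrightarrow> SB_generated A" by (rule fg_imp_SB[OF g])
  have 2: "SB_generated A \<Longrightarrow> uncountable_cofinality A" by (rule group.SB_imp_UC[OF g])
  have 3: "uncountable_cofinality A \<Longrightarrow> finitely_generated A" by (rule comm_group.UC_imp_fg[OF assms])
  show ?thesis using 1 2 3 by blast
qed

end
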